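(* Assume $f$ is $L$-smooth and the inexact polar assumption holds. Let $K\ge1$, $\bar\gamma:=\max_{0\le k\le K-1}\gamma_k$, $\bar\nu:=\max_{0\le k\le K-1}\nu_k$. Then Muon satisfies $$\eta(1-\bar\gamma)\sum_{k=0}^{K-1}\mathbb E\|\nabla f({\bm{X}}_k)\|_F\le f({\bm{X}}_0)-f_\star+\eta\big(1+\sqrt{d_0}(1+\bar\nu)\big)\sum_{k=0}^{K-1}\mathbb E\|{\bm{S}}_k\|_F+\frac{Ld_0}{2}\eta^2(1+\bar\nu)^2K.$$
   Context: Norms on $\mathbb{R}^{m\times n}$: $\|\cdot\|_F$ Frobenius, $\|\cdot\|_{\mathrm{op}}$ spectral, $\|\cdot\|_*$ nuclear; $\langle{\bm{A}},{\bm{B}}\rangle=\mathrm{tr}({\bm{A}}^\top{\bm{B}})$; $d_0:=\min\{m,n\}$. $f:\mathbb{R}^{m\times n}\to\mathbb R$ is differentiable with $f\ge f_\star>-\infty$; $L$-smooth means $\|\nabla f({\bm{X}})-\nabla f({\bm{Y}})\|_F\le L\|{\bm{X}}-{\bm{Y}}\|_F$. Muon: given $\beta\in(0,1)$, $\eta>0$, $B\in\mathbb N$, initial ${\bm{X}}_0,{\bm{C}}_{-1}$ and a (possibly randomized) map $\mathcal T$, for $k=0,1,\dots$: ${\bm{G}}_k=\frac1B\sum_{i=1}^B{\bm{G}}_k^i$, ${\bm{C}}_k=\beta{\bm{C}}_{k-1}+{\bm{G}}_k$, ${\bm{M}}_k=\beta{\bm{C}}_k+{\bm{G}}_k$, ${\bm{X}}_{k+1}={\bm{X}}_k-\eta\mathcal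 T({\bm{M}}_k)$. $\widetilde{{\bm{M}}}_k:=(1-\beta){\bm{M}}_k$, ${\bm{S}}_k:=\widetilde{{\bm{M}}}_k-\nabla f({\bm{X}}_k)$. Inexact polar assumption: for each $k$, letting $\mathcal G_k$ be the $\sigma$-field of the algorithm's history up to the formation of ${\bm{M}}_k$ (before any internal randomness used by $\mathcal T$ at step $k$), there are deterministic $\gamma_k\in[0,1)$, $\nu_k\ge0$ with $\mathbb E[\langle{\bm{M}}_k,\mathcal T({\bm{M}}_k)\rangle\mid\mathcal G_k]\ge(1-\gamma_k)\|{\bm{M}}_k\|_*$ and $\mathbb E[\|\mathcal T({\bm{M}}_k)\|_{\mathrm{op}}^2\mid\mathcal G_k]\le(1+\nu_k)^2$. All expectations are assumed finite. *)

theory Defs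
  imports "HOL-Analysis.Analysis" "HOL-Probability.Probability"
begin

text \<open>Matrices in R^{m x n} are rendered as real^'n^'m (rows indexed by 'm).
  On this type, norm is the Frobenius norm and the inner product is tr(A^T B).\<close>

definition opnorm :: "real^'n^'m \<Rightarrow> real" where
  "opnorm A = onorm (\<lambda>x. A *v x)"

text \<open>Nuclear norm, defined as the dual norm of the spectral norm.\<close>
definition nucnorm :: "real^'n^'m \<Rightarrow> real" where
  "nucnorm A = Sup {A \<bullet> B | B. opnorm B \<le> 1}"

text \<open>History sigma-field up to the formation of M_k: generated by the stochastic
  gradients G_j^i (j \<le> k, i < B) and the internal randomness xi_j of T for j < k
  (initial points X_0, C_{-1} are deterministic).\<close>
definition muon_history ::
  "'a measure \<Rightarrow> 'r measure \<Rightarrow> (nat \<Rightarrow> nat \<Rightarrow> 'a \<Rightarrow> real^'n^'m) \<Rightarrow> (nat \<Rightarrow> 'a \<Rightarrow> 'r)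
    \<Rightarrow> nat \<Rightarrow> nat \<Rightarrow> 'a measure" where
  "muon_history P R G \<xi> B k = sigma (space P)
     ({G j i -` A \<inter> space P | j i A. j \<le> k \<and> i < B \<and> A \<in> sets borel}
      \<union> {\<xi> j -` A \<inter> space P | j A. j < k \<and> A \<in> sets R})"

end

theory Submission
  imports Defs
begin


lemma vec_norm_sq: "(norm (x::real^'n))\<^sup>2 = (\<Sum>i\<in>UNIV. (x$i)\<^sup>2)"
  by (simp add: norm_vec_def L2_set_def sum_nonneg)

lemma mat_norm_sq_rows: "(norm (A::real^'n^'m))\<^sup>2 = (\<Sum>i\<in>UNIV. (norm (A$i))\<^sup>2)"
  by (simp add: norm_vec_def L2_set_def sum_nonneg)

lemma mat_norm_sq_cols: "(norm (A::real^'n^'m))\<^sup>2 = (\<Sum>j\<in>UNIV. (norm (column j A))\<^sup>2)"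
proof -
  have "(norm A)\<^sup>2 = (\<Sum>i\<in>UNIV. \<Sum>j\<in>UNIV. (A$i$j)\<^sup>2)" by (simp add: mat_norm_sq_rows vec_norm_sq)
  also have "\<dots> = (\<Sum>j\<in>UNIV. \<Sum>i\<in>UNIV. (A$i$j)\<^sup>2)" by (rule sum.swap)
  also have "\<dots> = (\<Sum>j\<in>UNIV. (norm (column j A))\<^sup>2)" by (simp add: vec_norm_sq column_def)
  finally show ?thesis .
qed

lemma opnorm_bound: "norm (A *v x) \<le> opnorm A * norm x"
  unfolding opnorm_def using onorm[OF matrix_vector_mul_bounded_linear] by blast

lemma opnorm_nonneg: "opnorm A \<ge> 0"
  unfolding opnorm_def by (rule onorm_pos_le[OF matrix_vector_mul_bounded_linear])

lemma frob_cols: "(norm (A::real^'n^'m))\<^sup>2 \<le> real CARD('n) * (opnorm A)\<^sup>2"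
proof -
  have "(norm A)\<^sup>2 = (\<Sum>j\<in>UNIV. (norm (column j A))\<^sup>2)" by (rule mat_norm_sq_cols)
  also have "\<dots> \<le> (\<Sum>j\<in>(UNIV::'n set). (opnorm A)\<^sup>2)"
    apply (rule sum_mono) apply (rule power_mono)
    using norm_column_le_onorm[of _ A] by (auto simp: opnorm_def)
  finally show ?thesis by simp
qed

lemma row_le_opnorm: "norm ((A::real^'n^'m) $ i) \<le> opnorm A"
proof -
  have "(norm (A$i))\<^sup>2 = (A *v (A$i)) $ i"
    by (simp add: matrix_vector_mult_def power2_norm_eq_inner inner_vec_def power2_eq_square[symmetric] vec_norm_sq)
  also have "\<dots> \<le> norm (A *v (A$i))" using component_le_norm_cart[of "A *v (A$i)" i] by simp
  also have "\<dots> \<le> opnorm A * norm (A$i)" by (rule opnorm_bound)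
  finally have "norm (A$i) * norm (A$i) \<le> opnorm A * norm (A$i)" by (simp add: power2_eq_square)
  then show ?thesis
  proof (cases "norm (A$i) = 0")
    case True then show ?thesis using opnorm_nonneg[of A] by simp
  next
    case False
    then have "norm (A$i) > 0" by simp
    then show ?thesis using \<open>norm (A$i) * norm (A$i) \<le> opnorm A * norm (A$i)\<close>
      by (simp add: mult_le_cancel_right)
  qed
qed

lemma frob_rows: "(norm (A::real^'n^'m))\<^sup>2 \<le> real CARD('m) * (opnorm A)\<^sup>2"
proof -
  have "(norm A)\<^sup>2 = (\<Sum>i\<in>UNIV. (norm (A$i))\<^sup>2)" by (rule mat_norm_sq_rows)
  also have "\<dots> \<le> (\<Sum>i\<in>(UNIV::'m set). (opnorm A)\<^sup>2)"
    apply (rule sum_mono) apply (rule power_mono)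
    using row_le_opnorm[of A] by auto
  finally show ?thesis by simp
qed

lemma frob_sq_le: "(norm (A::real^'n^'m))\<^sup>2 \<le> real (min CARD('m) CARD('n)) * (opnorm A)\<^sup>2"
proof (cases "CARD('m) \<le> CARD('n)")
  case True
  then have "min CARD('m) CARD('n) = CARD('m)" by (rule min_absorb1)
  then show ?thesis using frob_rows[of A] by (simp only:)
next
  case False
  then have "min CARD('m) CARD('n) = CARD('n)" by simp
  then show ?thesis using frob_cols[of A] by (simp only:)
qed

lemma frob_le: "norm (A::real^'n^'m) \<le> sqrt (real (min CARD('m) CARD('n))) * opnorm A"
proof -
  have "sqrt ((norm A)\<^sup>2) \<le> sqrt (real (min CARD('m) CARD('n)) * (opnorm A)\<^sup>2)"
    using real_sqrt_le_mono frob_sq_le by blast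
  also have "\<dots> = sqrt (real (min CARD('m) CARD('n))) * opnorm A"
    using opnorm_nonneg[of A] by (simp add: real_sqrt_mult)
  finally show ?thesis by simp
qed

lemma opnorm_le_frob: "opnorm (A::real^'n^'m) \<le> norm A"
  unfolding opnorm_def
proof (rule onorm_le)
  fix x :: "real^'n"
  have "(norm (A *v x))\<^sup>2 = (\<Sum>i\<in>UNIV. ((A *v x)$i)\<^sup>2)" by (rule vec_norm_sq)
  also have "\<dots> = (\<Sum>i\<in>UNIV. (A$i \<bullet> x)\<^sup>2)"
    by (simp add: matrix_vector_mult_def inner_vec_def)
  also have "\<dots> \<le> (\<Sum>i\<in>UNIV. (norm (A$i))\<^sup>2 * (norm x)\<^sup>2)"
  proof (rule sum_mono)
    fix i
    have "\<bar>A$i \<bullet> x\<bar> \<le> norm (A$i) * norm x" by (rule Cauchy_Schwarz_ineq2)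
    then have "\<bar>A$i \<bullet> x\<bar>\<^sup>2 \<le> (norm (A$i) * norm x)\<^sup>2" by (rule power_mono) simp
    then show "(A$i \<bullet> x)\<^sup>2 \<le> (norm (A$i))\<^sup>2 * (norm x)\<^sup>2" by (simp add: power_mult_distrib)
  qed
  also have "\<dots> = (\<Sum>i\<in>UNIV. (norm (A$i))\<^sup>2) * (norm x)\<^sup>2" by (simp add: sum_distrib_right)
  also have "\<dots> = (norm A * norm x)\<^sup>2" by (simp only: mat_norm_sq_rows[symmetric] power_mult_distrib)
  finally show "norm (A *v x) \<le> norm A * norm x"
    by (rule power2_le_imp_le) simp
qed

lemma nucnorm_ge: "nucnorm (A::real^'n^'m) \<ge> norm A"
proof (cases "A = 0")
  case True
  have z: "opnorm (0::real^'n^'m) \<le> 1" by (simp add: opnorm_def onorm_zero)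
  have "{A \<bullet> B | B. opnorm B \<le> 1} = {0}" using True z by auto
  then show ?thesis using True by (simp add: nucnorm_def)
next
  case False
  let ?B = "(1 / norm A) *\<^sub>R A"
  have op: "opnorm ?B \<le> 1"
    using opnorm_le_frob[of ?B] False by simp
  have "A \<bullet> ?B = norm A" using False by (simp add: power2_norm_eq_inner[symmetric] power2_eq_square)
  then have mem: "norm A \<in> {A \<bullet> B | B. opnorm B \<le> 1}" using op by force
  have bdd: "bdd_above {A \<bullet> B | B. opnorm B \<le> 1}"
  proof (rule bdd_aboveI)
    fix y assume "y \<in> {A \<bullet> B | B. opnorm B \<le> 1}"
    then obtain B where y: "y = A \<bullet> B" "opnorm B \<le> 1" by auto
    have "y \<le> norm A * norm B" using y Cauchy_Schwarz_ineq2 by (metis abs_le_iff)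
    also have "\<dots> \<le> norm A * (sqrt (real (min CARD('m) CARD('n))) * opnorm B)"
      by (rule mult_left_mono[OF frob_le norm_ge_zero])
    also have "\<dots> \<le> norm A * (sqrt (real (min CARD('m) CARD('n))) * 1)"
      using y(2) by (intro mult_left_mono) auto
    finally show "y \<le> norm A * sqrt (real (min CARD('m) CARD('n)))" by simp
  qed
  show ?thesis unfolding nucnorm_def by (rule cSup_upper[OF mem bdd])
qed



lemma descent:
  fixes f :: "'v::real_inner \<Rightarrow> real" and g :: "'v \<Rightarrow> 'v"
  assumes grad: "\<And>x. (f has_derivative (\<lambda>h. g x \<bullet> h)) (at x)"
    and lip: "\<And>x y. norm (g x - g y) \<le> L * norm (x - y)"
  shows "f y \<le> f x + g x \<bullet> (y - x) + L / 2 * (norm (y - x))\<^sup>2"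
proof -
  define h where "h = y - x"
  define \<phi> where "\<phi> t = f (x + t *\<^sub>R h) - t * (g x \<bullet> h) - L / 2 * t\<^sup>2 * (norm h)\<^sup>2" for t :: real
  have der: "(\<phi> has_real_derivative (g (x + t *\<^sub>R h) \<bullet> h - g x \<bullet> h - L * t * (norm h)\<^sup>2)) (at t)" for t
  proof -
    have d1: "((\<lambda>t. x + t *\<^sub>R h) has_derivative (\<lambda>s. s *\<^sub>R h)) (at t)"
      by (auto intro!: derivative_eq_intros)
    have "((\<lambda>t. f (x + t *\<^sub>R h)) has_derivative (\<lambda>s. g (x + t *\<^sub>R h) \<bullet> (s *\<^sub>R h))) (at t)"
      using has_derivative_compose[OF d1 grad] .
    moreover have "(\<lambda>s. g (x + t *\<^sub>R h) \<bullet> (s *\<^sub>R h)) = (\<lambda>s. (g (x + t *\<^sub>R h) \<bullet> h) * s)"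
      by (auto simp: mult.commute)
    ultimately have "((\<lambda>t. f (x + t *\<^sub>R h)) has_real_derivative (g (x + t *\<^sub>R h) \<bullet> h)) (at t)"
      by (simp add: has_field_derivative_def)
    then show ?thesis unfolding \<phi>_def
      by (auto intro!: derivative_eq_intros)
  qed
  have nonpos: "g (x + t *\<^sub>R h) \<bullet> h - g x \<bullet> h - L * t * (norm h)\<^sup>2 \<le> 0" if "0 \<le> t" for t
  proof -
    have "g (x + t *\<^sub>R h) \<bullet> h - g x \<bullet> h = (g (x + t *\<^sub>R h) - g x) \<bullet> h" by (simp add: inner_diff_left)
    also have "\<dots> \<le> norm (g (x + t *\<^sub>R h) - g x) * norm h" by (rule norm_cauchy_schwarz)
    also have "\<dots> \<le> (L * norm (t *\<^sub>R h)) * norm h"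
      using lip[of "x + t *\<^sub>R h" x] by (intro mult_right_mono) auto
    also have "\<dots> = L * t * (norm h)\<^sup>2" using that by (simp add: power2_eq_square)
    finally show ?thesis by simp
  qed
  have "\<phi> 1 \<le> \<phi> 0"
  proof (rule DERIV_nonpos_imp_nonincreasing[of 0 1])
    fix t :: real assume "0 \<le> t" "t \<le> 1"
    then show "\<exists>y. (\<phi> has_real_derivative y) (at t) \<and> y \<le> 0"
      using der[of t] nonpos[of t] by blast
  qed simp
  then show ?thesis unfolding \<phi>_def h_def by simp
qed



lemma hist_space: "space (muon_history P R G \<xi> B k) = space P"
  unfolding muon_history_def by (rule space_measure_of_conv)

lemma hist_sets: "sets (muon_history P R G \<xi> B k) = sigma_sets (space P)
     ({G j i -` A \<inter> space P | j i A. j \<le> k \<and> i < B \<and> A \<in> sets borel}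
      \<union> {\<xi> j -` A \<inter> space P | j A. j < k \<and> A \<in> sets R})"
  unfolding muon_history_def by (rule sets_measure_of) auto

lemma hist_G:
  fixes G :: "nat \<Rightarrow> nat \<Rightarrow> 'a \<Rightarrow> real^'n^'m"
  assumes "j \<le> k" "i < B"
  shows "G j i \<in> borel_measurable (muon_history P R G \<xi> B k)"
proof (rule measurableI)
  show "G j i x \<in> space borel" for x by simp
  fix A :: "(real^'n^'m) set" assume "A \<in> sets borel"
  then show "G j i -` A \<inter> space (muon_history P R G \<xi> B k) \<in> sets (muon_history P R G \<xi> B k)"
    using assms unfolding hist_space hist_sets by (intro sigma_sets.Basic) blast
qed

lemma hist_xi:
  fixes G :: "nat \<Rightarrow> nat \<Rightarrow> 'a \<Rightarrow> real^'n^'m"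
  assumes "\<xi> j \<in> P \<rightarrow>\<^sub>M R" "j < k"
  shows "\<xi> j \<in> muon_history P R G \<xi> B k \<rightarrow>\<^sub>M R"
proof (rule measurableI)
  show "\<xi> j x \<in> space R" if "x \<in> space (muon_history P R G \<xi> B k)" for x
    using that assms(1) unfolding hist_space by (auto intro: measurable_space)
  fix A assume "A \<in> sets R"
  then show "\<xi> j -` A \<inter> space (muon_history P R G \<xi> B k) \<in> sets (muon_history P R G \<xi> B k)"
    using assms unfolding hist_space hist_sets by (intro sigma_sets.Basic) blast
qed

lemma hist_subalg:
  fixes G :: "nat \<Rightarrow> nat \<Rightarrow> 'a \<Rightarrow> real^'n^'m"
  assumes "\<And>j i. G j i \<in> borel_measurable P" "\<And>j. \<xi> j \<in> P \<rightarrow>\<^sub>M R"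
  shows "subalgebra P (muon_history P R G \<xi> B k)"
  unfolding subalgebra_def hist_space hist_sets
proof (intro conjI refl sets.sigma_sets_subset subsetI)
  fix x assume "x \<in> {G j i -` A \<inter> space P | j i A. j \<le> k \<and> i < B \<and> A \<in> sets borel}
      \<union> {\<xi> j -` A \<inter> space P | j A. j < k \<and> A \<in> sets R}"
  then show "x \<in> sets P" using assms by (auto intro: measurable_sets)
qed

lemma le_one_plus_sq: "0 \<le> (x::real) \<Longrightarrow> x \<le> 1 + x\<^sup>2"
proof -
  assume "0 \<le> x"
  have "0 \<le> (x - 1)\<^sup>2" by simp
  then have "0 \<le> x * x - 2 * x + 1" by (simp add: power2_eq_square algebra_simps)
  then show ?thesis using \<open>0 \<le> x\<close> by (simp add: power2_eq_square)
qed



theorem mainTheorem15: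
  fixes P :: "'a measure" and R :: "'r measure"
    and f :: "real^'n^'m \<Rightarrow> real" and gradf :: "real^'n^'m \<Rightarrow> real^'n^'m"
    and L fstar \<beta> \<eta> :: real and B K :: nat
    and X0 Cm1 :: "real^'n^'m"
    and G :: "nat \<Rightarrow> nat \<Rightarrow> 'a \<Rightarrow> real^'n^'m"
    and \<xi> :: "nat \<Rightarrow> 'a \<Rightarrow> 'r"
    and T :: "real^'n^'m \<Rightarrow> 'r \<Rightarrow> real^'n^'m"
    and Gb C M X :: "nat \<Rightarrow> 'a \<Rightarrow> real^'n^'m"
    and \<gamma> \<nu> :: "nat \<Rightarrow> real"
  assumes P: "prob_space P"
    and grad: "\<And>x. (f has_derivative (\<lambda>h. gradf x \<bullet> h)) (at x)"
    and smooth: "\<And>x y. norm (gradf x - gradf y) \<le> L * norm (x - y)"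
    and lower: "\<And>x. f x \<ge> fstar"
    and beta: "0 < \<beta>" "\<beta> < 1" and eta: "\<eta> > 0" and Bpos: "B \<ge> 1"
    and G_meas: "\<And>k i. G k i \<in> borel_measurable P"
    and xi_meas: "\<And>k. \<xi> k \<in> P \<rightarrow>\<^sub>M R"
    and T_meas: "(\<lambda>(A, r). T A r) \<in> borel \<Otimes>\<^sub>M R \<rightarrow>\<^sub>M borel"
    and Gb_def: "\<And>k \<omega>. Gb k \<omega> = (1 / real B) *\<^sub>R (\<Sum>i<B. G k i \<omega>)"
    and C0: "\<And>\<omega>. C 0 \<omega> = \<beta> *\<^sub>R Cm1 + Gb 0 \<omega>"
    and CSuc: "\<And>k \<omega>. C (Suc k) \<omega> = \<beta> *\<^sub>R C k \<omega> + Gb (Suc k) \<omega>"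
    and M_def: "\<And>k \<omega>. M k \<omega> = \<beta> *\<^sub>R C k \<omega> + Gb k \<omega>"
    and X0: "\<And>\<omega>. X 0 \<omega> = X0"
    and XSuc: "\<And>k \<omega>. X (Suc k) \<omega> = X k \<omega> - \<eta> *\<^sub>R T (M k \<omega>) (\<xi> k \<omega>)"
    and gamma: "\<And>k. 0 \<le> \<gamma> k \<and> \<gamma> k < 1" and nu: "\<And>k. \<nu> k \<ge> 0"
    and polar1: "\<And>k. AE \<omega> in P.
        real_cond_exp P (muon_history P R G \<xi> B k) (\<lambda>\<omega>. M k \<omega> \<bullet> T (M k \<omega>) (\<xi> k \<omega>)) \<omega>
          \<ge> (1 - \<gamma> k) * nucnorm (M k \<omega>)"
    and polar2: "\<And>k. AE \<omega> in P.
        real_cond_exp P (muon_history P R G \<xi> B k) (\<lambda>\<omega>. (opnorm (T (M k \<omega>) (\<xi> k \<omega>)))\<^sup>2) \<omega>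
          \<le> (1 + \<nu> k)\<^sup>2"
    and int_f: "\<And>k. integrable P (\<lambda>\<omega>. f (X k \<omega>))"
    and int_grad: "\<And>k. integrable P (\<lambda>\<omega>. norm (gradf (X k \<omega>)))"
    and int_S: "\<And>k. integrable P (\<lambda>\<omega>. norm ((1 - \<beta>) *\<^sub>R M k \<omega> - gradf (X k \<omega>)))"
    and int_nuc: "\<And>k. integrable P (\<lambda>\<omega>. nucnorm (M k \<omega>))"
    and int_inner: "\<And>k. integrable P (\<lambda>\<omega>. M k \<omega> \<bullet> T (M k \<omega>) (\<xi> k \<omega>))"
    and int_gradT: "\<And>k. integrable P (\<lambda>\<omega>. gradf (X k \<omega>) \<bullet> T (M k \<omega>) (\<xi> k \<omega>))"
    and int_op2: "\<And>k. integrable P (\<lambda>\<omega>. (opnorm (T (M k \<omega>) (\<xi> k \<omega>)))\<^sup>2)"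
    and int_ST: "\<And>k. integrable P (\<lambda>\<omega>. norm ((1 - \<beta>) *\<^sub>R M k \<omega> - gradf (X k \<omega>))
                                      * opnorm (T (M k \<omega>) (\<xi> k \<omega>)))"
    and K: "K \<ge> 1"
  shows "\<eta> * (1 - Max (\<gamma> ` {..<K})) * (\<Sum>k<K. (\<integral>\<omega>. norm (gradf (X k \<omega>)) \<partial>P))
    \<le> f X0 - fstar
       + \<eta> * (1 + sqrt (real (min CARD('m) CARD('n))) * (1 + Max (\<nu> ` {..<K})))
           * (\<Sum>k<K. (\<integral>\<omega>. norm ((1 - \<beta>) *\<^sub>R M k \<omega> - gradf (X k \<omega>)) \<partial>P))
       + L * real (min CARD('m) CARD('n)) / 2 * \<eta>\<^sup>2 * (1 + Max (\<nu> ` {..<K}))\<^sup>2 * real K"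
proof -
  interpret P: prob_space P by (rule P)
  define d where "d = real (min CARD('m) CARD('n))"
  define Fh where "Fh k = muon_history P R G \<xi> B k" for k
  define S where "S k \<omega> = (1 - \<beta>) *\<^sub>R M k \<omega> - gradf (X k \<omega>)" for k \<omega>
  define Tk where "Tk k \<omega> = T (M k \<omega>) (\<xi> k \<omega>)" for k \<omega>
  define Mg where "Mg = Max (\<gamma> ` {..<K})"
  define Mn where "Mn = Max (\<nu> ` {..<K})"
  have dnn: "0 \<le> d" unfolding d_def by simp
  have Lnn: "L \<ge> 0"
  proof -
    define e :: "real^'n^'m" where "e = (\<chi> i j. 1)"
    have "e $ undefined $ undefined = 1" by (simp add: e_def)
    then have "e \<noteq> 0" by auto
    have "0 \<le> norm (gradf e - gradf 0)" by simp
    also have "\<dots> \<le> L * norm (e - 0)" by (rule smooth)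
    finally have "0 \<le> L * norm e" by simp
    with \<open>e \<noteq> 0\<close> show ?thesis by (simp add: zero_le_mult_iff)
  qed
  have lipg: "L-lipschitz_on UNIV gradf"
    by (rule lipschitz_onI) (use smooth Lnn in \<open>auto simp: dist_norm\<close>)
  have gm: "gradf \<in> borel_measurable borel"
    by (rule borel_measurable_continuous_onI[OF lipschitz_on_continuous_on[OF lipg]])
  have subalg: "subalgebra P (Fh k)" for k
    unfolding Fh_def by (rule hist_subalg[OF G_meas xi_meas])
  have Smeas: "(\<lambda>\<omega>. norm (S k \<omega>)) \<in> borel_measurable (Fh k)" for k
  proof -
    have Gbm: "Gb j \<in> borel_measurable (Fh k)" if "j \<le> k" for j
    proof -
      have "(\<lambda>\<omega>. (1 / real B) *\<^sub>R (\<Sum>i<B. G j i \<omega>)) \<in> borel_measurable (Fh k)"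
        using hist_G[OF that] unfolding Fh_def
        by (intro borel_measurable_scaleR borel_measurable_const borel_measurable_sum) auto
      moreover have "Gb j = (\<lambda>\<omega>. (1 / real B) *\<^sub>R (\<Sum>i<B. G j i \<omega>))" using Gb_def by auto
      ultimately show ?thesis by simp
    qed
    have Cm: "j \<le> k \<longrightarrow> C j \<in> borel_measurable (Fh k)" for j
    proof (induction j)
      case 0
      have "C 0 = (\<lambda>\<omega>. \<beta> *\<^sub>R Cm1 + Gb 0 \<omega>)" using C0 by auto
      then show ?case using Gbm[of 0] by (auto intro!: borel_measurable_add)
    next
      case (Suc j)
      have "C (Suc j) = (\<lambda>\<omega>. \<beta> *\<^sub>R C j \<omega> + Gb (Suc j) \<omega>)" using CSuc by auto
      then show ?case using Gbm[of "Suc j"] Suc by (auto intro!: borel_measurable_add borel_measurable_scaleR)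
    qed
    have Mm: "M j \<in> borel_measurable (Fh k)" if "j \<le> k" for j
    proof -
      have "M j = (\<lambda>\<omega>. \<beta> *\<^sub>R C j \<omega> + Gb j \<omega>)" using M_def by auto
      then show ?thesis using Gbm[OF that] Cm[of j] that by (auto intro!: borel_measurable_add borel_measurable_scaleR)
    qed
    have Tm: "Tk j \<in> borel_measurable (Fh k)" if "j < k" for j
    proof -
      have xim: "\<xi> j \<in> Fh k \<rightarrow>\<^sub>M R" unfolding Fh_def by (rule hist_xi[OF xi_meas that])
      have "(\<lambda>\<omega>. (\<lambda>(A, r). T A r) (M j \<omega>, \<xi> j \<omega>)) \<in> borel_measurable (Fh k)"
        by (rule measurable_compose[OF measurable_Pair[OF Mm xim] T_meas]) (use that in simp)
      then show ?thesis by (simp add: Tk_def[abs_def])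
    qed
    have Xm: "j \<le> k \<longrightarrow> X j \<in> borel_measurable (Fh k)" for j
    proof (induction j)
      case 0
      have "X 0 = (\<lambda>\<omega>. X0)" using X0 by auto
      then show ?case by simp
    next
      case (Suc j)
      have "X (Suc j) = (\<lambda>\<omega>. X j \<omega> - \<eta> *\<^sub>R Tk j \<omega>)" using XSuc by (auto simp: Tk_def)
      then show ?case using Tm[of j] Suc by (auto intro!: borel_measurable_diff borel_measurable_scaleR)
    qed
    have "(\<lambda>\<omega>. gradf (X k \<omega>)) \<in> borel_measurable (Fh k)"
      using measurable_compose[OF mp[OF Xm[of k]] gm] by simp
    then have "S k \<in> borel_measurable (Fh k)"
      unfolding S_def[abs_def] using Mm[of k] by (auto intro!: borel_measurable_diff borel_measurable_scaleR)
    then show ?thesis by (rule measurable_compose[OF _ borel_measurable_norm])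
  qed
  have step: "\<eta> * (1 - \<gamma> k) * (\<integral>\<omega>. norm (gradf (X k \<omega>)) \<partial>P)
      \<le> (\<integral>\<omega>. f (X k \<omega>) \<partial>P) - (\<integral>\<omega>. f (X (Suc k) \<omega>) \<partial>P)
        + \<eta> * (1 + sqrt d * (1 + \<nu> k)) * (\<integral>\<omega>. norm (S k \<omega>) \<partial>P)
        + L * d / 2 * \<eta>\<^sup>2 * (1 + \<nu> k)\<^sup>2" for k
  proof -
    interpret Fk: finite_measure_subalgebra P "Fh k"
      by (intro finite_measure_subalgebra.intro finite_measure_subalgebra_axioms.intro P.finite_measure_axioms subalg)
    define on where "on \<omega> = opnorm (Tk k \<omega>)" for \<omega>
    have onn: "0 \<le> on \<omega>" for \<omega> unfolding on_def by (rule opnorm_nonneg)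
    have int_o2: "integrable P (\<lambda>\<omega>. (on \<omega>)\<^sup>2)" using int_op2[of k] by (simp add: on_def Tk_def)
    have om: "on \<in> borel_measurable P"
    proof -
      have "(\<lambda>\<omega>. sqrt ((on \<omega>)\<^sup>2)) \<in> borel_measurable P"
        using borel_measurable_integrable[OF int_o2] by measurable
      moreover have "(\<lambda>\<omega>. sqrt ((on \<omega>)\<^sup>2)) = on" using onn by auto
      ultimately show ?thesis by simp
    qed
    have int_o: "integrable P on"
    proof (rule Bochner_Integration.integrable_bound[OF _ om])
      show "integrable P (\<lambda>\<omega>. 1 + (on \<omega>)\<^sup>2)" using int_o2 by simp
      show "AE \<omega> in P. norm (on \<omega>) \<le> norm (1 + (on \<omega>)\<^sup>2)"
        using onn le_one_plus_sq by auto
    qed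
    have int_gT: "integrable P (\<lambda>\<omega>. gradf (X k \<omega>) \<bullet> Tk k \<omega>)" using int_gradT[of k] by (simp add: Tk_def)
    have int_MT: "integrable P (\<lambda>\<omega>. M k \<omega> \<bullet> Tk k \<omega>)" using int_inner[of k] by (simp add: Tk_def)
    have int_So: "integrable P (\<lambda>\<omega>. norm (S k \<omega>) * on \<omega>)" using int_ST[of k] by (simp add: S_def Tk_def on_def)
    have int_Sn: "integrable P (\<lambda>\<omega>. norm (S k \<omega>))" using int_S[of k] by (simp add: S_def)
    have p1: "AE \<omega> in P. real_cond_exp P (Fh k) (\<lambda>\<omega>. M k \<omega> \<bullet> Tk k \<omega>) \<omega> \<ge> (1 - \<gamma> k) * nucnorm (M k \<omega>)"
      using polar1[of k] by (simp add: Fh_def Tk_def)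
    have p2: "AE \<omega> in P. real_cond_exp P (Fh k) (\<lambda>\<omega>. (on \<omega>)\<^sup>2) \<omega> \<le> (1 + \<nu> k)\<^sup>2"
      using polar2[of k] by (simp add: Fh_def Tk_def on_def)
    have desc: "f (X (Suc k) \<omega>) \<le> f (X k \<omega>) - \<eta> * (gradf (X k \<omega>) \<bullet> Tk k \<omega>) + L * d / 2 * \<eta>\<^sup>2 * (on \<omega>)\<^sup>2" for \<omega>
    proof -
      have dif: "X (Suc k) \<omega> - X k \<omega> = - (\<eta> *\<^sub>R Tk k \<omega>)" using XSuc by (simp add: Tk_def)
      have "f (X (Suc k) \<omega>) \<le> f (X k \<omega>) + gradf (X k \<omega>) \<bullet> (X (Suc k) \<omega> - X k \<omega>) + L / 2 * (norm (X (Suc k) \<omega> - X k \<omega>))\<^sup>2"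
        by (rule descent[OF grad smooth])
      also have "\<dots> = f (X k \<omega>) - \<eta> * (gradf (X k \<omega>) \<bullet> Tk k \<omega>) + L / 2 * \<eta>\<^sup>2 * (norm (Tk k \<omega>))\<^sup>2"
        unfolding dif using eta by (simp add: power_mult_distrib)
      also have "\<dots> \<le> f (X k \<omega>) - \<eta> * (gradf (X k \<omega>) \<bullet> Tk k \<omega>) + L / 2 * \<eta>\<^sup>2 * (d * (on \<omega>)\<^sup>2)"
        using frob_sq_le[of "Tk k \<omega>"] Lnn unfolding d_def on_def by (intro add_left_mono mult_left_mono) auto
      finally show ?thesis by (simp add: algebra_simps)
    qed
    have Ea: "(\<integral>\<omega>. f (X (Suc k) \<omega>) \<partial>P) \<le> (\<integral>\<omega>. f (X k \<omega>) \<partial>P) - \<eta> * (\<integral>\<omega>. gradf (X k \<omega>) \<bullet> Tk k \<omega> \<partial>P)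
        + L * d / 2 * \<eta>\<^sup>2 * (\<integral>\<omega>. (on \<omega>)\<^sup>2 \<partial>P)"
    proof -
      have "(\<integral>\<omega>. f (X (Suc k) \<omega>) \<partial>P) \<le> (\<integral>\<omega>. f (X k \<omega>) - \<eta> * (gradf (X k \<omega>) \<bullet> Tk k \<omega>) + L * d / 2 * \<eta>\<^sup>2 * (on \<omega>)\<^sup>2 \<partial>P)"
        using int_f int_gT int_o2 desc by (intro integral_mono) auto
      also have "\<dots> = (\<integral>\<omega>. f (X k \<omega>) \<partial>P) - \<eta> * (\<integral>\<omega>. gradf (X k \<omega>) \<bullet> Tk k \<omega> \<partial>P)
        + L * d / 2 * \<eta>\<^sup>2 * (\<integral>\<omega>. (on \<omega>)\<^sup>2 \<partial>P)"
        using int_f int_gT int_o2 by simp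
      finally show ?thesis .
    qed
    have Ec: "(\<integral>\<omega>. (on \<omega>)\<^sup>2 \<partial>P) \<le> (1 + \<nu> k)\<^sup>2"
    proof -
      have "(\<integral>\<omega>. (on \<omega>)\<^sup>2 \<partial>P) = (\<integral>\<omega>. real_cond_exp P (Fh k) (\<lambda>\<omega>. (on \<omega>)\<^sup>2) \<omega> \<partial>P)"
        using Fk.real_cond_exp_int(2)[OF int_o2] by simp
      also have "\<dots> \<le> (\<integral>\<omega>. (1 + \<nu> k)\<^sup>2 \<partial>P)"
        using p2 Fk.real_cond_exp_int(1)[OF int_o2] by (intro integral_mono_AE) auto
      finally show ?thesis by (simp add: P.prob_space)
    qed
    have Ee: "(\<integral>\<omega>. M k \<omega> \<bullet> Tk k \<omega> \<partial>P) \<ge> (1 - \<gamma> k) * (\<integral>\<omega>. nucnorm (M k \<omega>) \<partial>P)"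
    proof -
      have "(1 - \<gamma> k) * (\<integral>\<omega>. nucnorm (M k \<omega>) \<partial>P) = (\<integral>\<omega>. (1 - \<gamma> k) * nucnorm (M k \<omega>) \<partial>P)" by simp
      also have "\<dots> \<le> (\<integral>\<omega>. real_cond_exp P (Fh k) (\<lambda>\<omega>. M k \<omega> \<bullet> Tk k \<omega>) \<omega> \<partial>P)"
        using p1 Fk.real_cond_exp_int(1)[OF int_MT] int_nuc[of k] by (intro integral_mono_AE) auto
      also have "\<dots> = (\<integral>\<omega>. M k \<omega> \<bullet> Tk k \<omega> \<partial>P)"
        using Fk.real_cond_exp_int(2)[OF int_MT] by simp
      finally show ?thesis .
    qed
    have Ef: "(\<integral>\<omega>. norm (S k \<omega>) * on \<omega> \<partial>P) \<le> (1 + \<nu> k) * (\<integral>\<omega>. norm (S k \<omega>) \<partial>P)"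
    proof -
      have jen: "AE \<omega> in P. (real_cond_exp P (Fh k) on \<omega>)\<^sup>2 \<le> real_cond_exp P (Fh k) (\<lambda>\<omega>. (on \<omega>)\<^sup>2) \<omega>"
      proof (rule Fk.real_cond_exp_jensens_inequality(2)[where I=UNIV and q=power2 and a=0 and b=0])
        show "integrable P on" by (rule int_o)
        show "AE x in P. on x \<in> UNIV" by simp
        show "UNIV = {0::real<..<0} \<or> UNIV = {0::real<..} \<or> UNIV = {..<0::real} \<or> UNIV = (UNIV::real set)" by simp
        show "integrable P (\<lambda>x. (on x)\<^sup>2)" by (rule int_o2)
        show "convex_on UNIV power2" by (rule convex_power2)
        show "(power2::real\<Rightarrow>real) \<in> borel_measurable borel" by measurable
      qed
      have pos: "AE \<omega> in P. real_cond_exp P (Fh k) on \<omega> \<ge> 0"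
        using onn om by (intro Fk.real_cond_exp_pos) auto
      have ce_le: "AE \<omega> in P. real_cond_exp P (Fh k) on \<omega> \<le> 1 + \<nu> k"
        using jen pos p2
      proof eventually_elim
        case (elim \<omega>)
        have "(real_cond_exp P (Fh k) on \<omega>)\<^sup>2 \<le> (1 + \<nu> k)\<^sup>2" using elim(1) elim(3) by (rule order_trans)
        moreover have "0 \<le> 1 + \<nu> k" using nu[of k] by linarith
        ultimately show ?case by (rule power2_le_imp_le)
      qed
      have i1: "integrable P (\<lambda>\<omega>. norm (S k \<omega>) * real_cond_exp P (Fh k) on \<omega>)"
        and e1: "(\<integral>\<omega>. norm (S k \<omega>) * real_cond_exp P (Fh k) on \<omega> \<partial>P) = (\<integral>\<omega>. norm (S k \<omega>) * on \<omega> \<partial>P)"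
        using Fk.real_cond_exp_intg[OF int_So Smeas om] by auto
      have "(\<integral>\<omega>. norm (S k \<omega>) * on \<omega> \<partial>P) = (\<integral>\<omega>. norm (S k \<omega>) * real_cond_exp P (Fh k) on \<omega> \<partial>P)"
        using e1 by simp
      also have "\<dots> \<le> (\<integral>\<omega>. norm (S k \<omega>) * (1 + \<nu> k) \<partial>P)"
      proof (rule integral_mono_AE[OF i1])
        show "integrable P (\<lambda>\<omega>. norm (S k \<omega>) * (1 + \<nu> k))" using int_Sn by simp
        show "AE \<omega> in P. norm (S k \<omega>) * real_cond_exp P (Fh k) on \<omega> \<le> norm (S k \<omega>) * (1 + \<nu> k)"
          using ce_le by eventually_elim (rule mult_left_mono, auto)
      qed
      also have "\<dots> = (1 + \<nu> k) * (\<integral>\<omega>. norm (S k \<omega>) \<partial>P)" by simp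
      finally show ?thesis .
    qed
    have pd: "gradf (X k \<omega>) \<bullet> Tk k \<omega> \<ge> (1 - \<beta>) * (M k \<omega> \<bullet> Tk k \<omega>) - sqrt d * (norm (S k \<omega>) * on \<omega>)" for \<omega>
    proof -
      have g: "gradf (X k \<omega>) = (1 - \<beta>) *\<^sub>R M k \<omega> - S k \<omega>" by (simp add: S_def)
      have "S k \<omega> \<bullet> Tk k \<omega> \<le> norm (S k \<omega>) * norm (Tk k \<omega>)" by (rule norm_cauchy_schwarz)
      also have "\<dots> \<le> norm (S k \<omega>) * (sqrt d * on \<omega>)"
        using frob_le[of "Tk k \<omega>"] unfolding d_def on_def by (intro mult_left_mono) auto
      finally have "S k \<omega> \<bullet> Tk k \<omega> \<le> sqrt d * (norm (S k \<omega>) * on \<omega>)" by (simp add: algebra_simps)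
      then show ?thesis unfolding g by (simp add: inner_diff_left)
    qed
    have Ed: "(\<integral>\<omega>. gradf (X k \<omega>) \<bullet> Tk k \<omega> \<partial>P) \<ge> (1 - \<beta>) * (\<integral>\<omega>. M k \<omega> \<bullet> Tk k \<omega> \<partial>P) - sqrt d * (\<integral>\<omega>. norm (S k \<omega>) * on \<omega> \<partial>P)"
    proof -
      have "(1 - \<beta>) * (\<integral>\<omega>. M k \<omega> \<bullet> Tk k \<omega> \<partial>P) - sqrt d * (\<integral>\<omega>. norm (S k \<omega>) * on \<omega> \<partial>P)
          = (\<integral>\<omega>. (1 - \<beta>) * (M k \<omega> \<bullet> Tk k \<omega>) - sqrt d * (norm (S k \<omega>) * on \<omega>) \<partial>P)"
        using int_MT int_So by simp
      also have "\<dots> \<le> (\<integral>\<omega>. gradf (X k \<omega>) \<bullet> Tk k \<omega> \<partial>P)"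
        using int_MT int_So int_gT pd by (intro integral_mono) auto
      finally show ?thesis .
    qed
    have pg: "(1 - \<beta>) * nucnorm (M k \<omega>) \<ge> norm (gradf (X k \<omega>)) - norm (S k \<omega>)" for \<omega>
    proof -
      have "norm (gradf (X k \<omega>)) = norm ((1 - \<beta>) *\<^sub>R M k \<omega> - S k \<omega>)" by (simp add: S_def)
      also have "\<dots> \<le> norm ((1 - \<beta>) *\<^sub>R M k \<omega>) + norm (S k \<omega>)" by (rule norm_triangle_ineq4)
      also have "\<dots> = (1 - \<beta>) * norm (M k \<omega>) + norm (S k \<omega>)" using beta by simp
      also have "\<dots> \<le> (1 - \<beta>) * nucnorm (M k \<omega>) + norm (S k \<omega>)"
        using beta nucnorm_ge[of "M k \<omega>"] by (intro add_right_mono mult_left_mono) auto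
      finally show ?thesis by simp
    qed
    have Eg: "(1 - \<beta>) * (\<integral>\<omega>. nucnorm (M k \<omega>) \<partial>P) \<ge> (\<integral>\<omega>. norm (gradf (X k \<omega>)) \<partial>P) - (\<integral>\<omega>. norm (S k \<omega>) \<partial>P)"
    proof -
      have "(\<integral>\<omega>. norm (gradf (X k \<omega>)) \<partial>P) - (\<integral>\<omega>. norm (S k \<omega>) \<partial>P) = (\<integral>\<omega>. norm (gradf (X k \<omega>)) - norm (S k \<omega>) \<partial>P)"
        using int_grad[of k] int_Sn by simp
      also have "\<dots> \<le> (\<integral>\<omega>. (1 - \<beta>) * nucnorm (M k \<omega>) \<partial>P)"
        using int_grad[of k] int_Sn int_nuc[of k] pg by (intro integral_mono) auto
      also have "\<dots> = (1 - \<beta>) * (\<integral>\<omega>. nucnorm (M k \<omega>) \<partial>P)" by simp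
      finally show ?thesis .
    qed
    define a where "a = (\<integral>\<omega>. norm (gradf (X k \<omega>)) \<partial>P)"
    define sS where "sS = (\<integral>\<omega>. norm (S k \<omega>) \<partial>P)"
    define p where "p = (\<integral>\<omega>. gradf (X k \<omega>) \<bullet> Tk k \<omega> \<partial>P)"
    define mt where "mt = (\<integral>\<omega>. M k \<omega> \<bullet> Tk k \<omega> \<partial>P)"
    define nc where "nc = (\<integral>\<omega>. nucnorm (M k \<omega>) \<partial>P)"
    define so where "so = (\<integral>\<omega>. norm (S k \<omega>) * on \<omega> \<partial>P)"
    define q where "q = (\<integral>\<omega>. (on \<omega>)\<^sup>2 \<partial>P)"
    define F0 where "F0 = (\<integral>\<omega>. f (X k \<omega>) \<partial>P)"
    define F1 where "F1 = (\<integral>\<omega>. f (X (Suc k) \<omega>) \<partial>P)"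
    define c where "c = L * d / 2 * \<eta>\<^sup>2"
    note defs = a_def sS_def p_def mt_def nc_def so_def q_def F0_def F1_def
    have sSnn: "0 \<le> sS" unfolding sS_def by (rule integral_nonneg_AE) simp
    have cnn: "0 \<le> c" unfolding c_def using Lnn dnn by simp
    have Ea': "F1 \<le> F0 - \<eta> * p + c * q" using Ea unfolding defs c_def by simp
    have h1: "(1 - \<beta>) * ((1 - \<gamma> k) * nc) \<le> (1 - \<beta>) * mt"
      using Ee beta unfolding defs by (intro mult_left_mono) auto
    have h2: "sqrt d * so \<le> sqrt d * ((1 + \<nu> k) * sS)"
      using Ef dnn unfolding defs by (intro mult_left_mono) auto
    have h3: "(1 - \<gamma> k) * (a - sS) \<le> (1 - \<gamma> k) * ((1 - \<beta>) * nc)"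
      using Eg gamma[of k] unfolding defs by (intro mult_left_mono) auto
    have h4: "(1 - \<beta>) * ((1 - \<gamma> k) * nc) = (1 - \<gamma> k) * ((1 - \<beta>) * nc)" by (simp add: algebra_simps)
    have Ed': "(1 - \<beta>) * mt - sqrt d * so \<le> p" using Ed unfolding defs by simp
    have P0: "(1 - \<gamma> k) * (a - sS) - sqrt d * ((1 + \<nu> k) * sS) \<le> p"
      using h1 h2 h3 h4 Ed' by linarith
    have h5: "\<eta> * ((1 - \<gamma> k) * (a - sS) - sqrt d * ((1 + \<nu> k) * sS)) \<le> \<eta> * p"
      using P0 eta by (intro mult_left_mono) auto
    have h6: "c * q \<le> c * (1 + \<nu> k)\<^sup>2" using Ec cnn unfolding q_def by (intro mult_left_mono) auto
    have h7: "\<eta> * ((1 - \<gamma> k) * sS) \<le> \<eta> * sS"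
    proof -
      have "(1 - \<gamma> k) * sS \<le> 1 * sS" by (rule mult_right_mono) (use gamma[of k] sSnn in auto)
      then show ?thesis using eta by (intro mult_left_mono) auto
    qed
    have e1: "\<eta> * ((1 - \<gamma> k) * (a - sS) - sqrt d * ((1 + \<nu> k) * sS))
        = \<eta> * (1 - \<gamma> k) * a - \<eta> * ((1 - \<gamma> k) * sS) - \<eta> * sqrt d * (1 + \<nu> k) * sS"
      by (simp add: algebra_simps)
    have e2: "\<eta> * (1 + sqrt d * (1 + \<nu> k)) * sS = \<eta> * sS + \<eta> * sqrt d * (1 + \<nu> k) * sS"
      by (simp add: algebra_simps)
    have "\<eta> * (1 - \<gamma> k) * a \<le> F0 - F1 + \<eta> * (1 + sqrt d * (1 + \<nu> k)) * sS + c * (1 + \<nu> k)\<^sup>2"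
      using Ea' h5 h6 h7 e1 e2 by linarith
    then show ?thesis unfolding defs c_def .
  qed
  define a where "a k = (\<integral>\<omega>. norm (gradf (X k \<omega>)) \<partial>P)" for k
  define sS where "sS k = (\<integral>\<omega>. norm (S k \<omega>) \<partial>P)" for k
  define Fv where "Fv k = (\<integral>\<omega>. f (X k \<omega>) \<partial>P)" for k
  define c where "c = L * d / 2 * \<eta>\<^sup>2 * (1 + Mn)\<^sup>2"
  have fin: "finite (\<gamma> ` {..<K})" "finite (\<nu> ` {..<K})" by auto
  have step2: "\<eta> * (1 - Mg) * a k \<le> Fv k - Fv (Suc k) + \<eta> * (1 + sqrt d * (1 + Mn)) * sS k + c"
    if "k < K" for k
  proof -
    have gk: "\<gamma> k \<le> Mg" unfolding Mg_def using that fin by (intro Max_ge) auto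
    have nk: "\<nu> k \<le> Mn" unfolding Mn_def using that fin by (intro Max_ge) auto
    have ann: "0 \<le> a k" unfolding a_def by (rule integral_nonneg_AE) simp
    have snn: "0 \<le> sS k" unfolding sS_def by (rule integral_nonneg_AE) simp
    have m1: "\<eta> * (1 - Mg) * a k \<le> \<eta> * (1 - \<gamma> k) * a k"
      using gk eta ann by (intro mult_right_mono mult_left_mono) auto
    have "sqrt d * (1 + \<nu> k) \<le> sqrt d * (1 + Mn)" using nk dnn by (intro mult_left_mono) auto
    then have m2: "\<eta> * (1 + sqrt d * (1 + \<nu> k)) * sS k \<le> \<eta> * (1 + sqrt d * (1 + Mn)) * sS k"
      using eta snn by (intro mult_right_mono mult_left_mono) auto
    have "(1 + \<nu> k)\<^sup>2 \<le> (1 + Mn)\<^sup>2" using nk nu[of k] by (intro power_mono) auto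
    then have m3: "L * d / 2 * \<eta>\<^sup>2 * (1 + \<nu> k)\<^sup>2 \<le> c"
      unfolding c_def using Lnn dnn by (intro mult_left_mono) auto
    show ?thesis using step[of k] m1 m2 m3 unfolding a_def sS_def Fv_def by linarith
  qed
  have "(\<Sum>k<K. \<eta> * (1 - Mg) * a k) \<le> (\<Sum>k<K. Fv k - Fv (Suc k) + \<eta> * (1 + sqrt d * (1 + Mn)) * sS k + c)"
    using step2 by (intro sum_mono) auto
  also have "\<dots> = (Fv 0 - Fv K) + \<eta> * (1 + sqrt d * (1 + Mn)) * (\<Sum>k<K. sS k) + c * real K"
    by (simp add: sum.distrib sum_lessThan_telescope' sum_distrib_left)
  also have "\<dots> \<le> (f X0 - fstar) + \<eta> * (1 + sqrt d * (1 + Mn)) * (\<Sum>k<K. sS k) + c * real K"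
  proof -
    have "Fv 0 = f X0" unfolding Fv_def using X0 by (simp add: P.prob_space)
    moreover have "fstar \<le> Fv K"
    proof -
      have "(\<integral>\<omega>. fstar \<partial>P) \<le> Fv K" unfolding Fv_def using int_f[of K] lower by (intro integral_mono) auto
      then show ?thesis by (simp add: P.prob_space)
    qed
    ultimately show ?thesis by linarith
  qed
  finally have "\<eta> * (1 - Mg) * (\<Sum>k<K. a k) \<le> f X0 - fstar + \<eta> * (1 + sqrt d * (1 + Mn)) * (\<Sum>k<K. sS k) + c * real K"
    by (simp add: sum_distrib_left)
  then show ?thesis unfolding a_def sS_def c_def S_def d_def Mg_def Mn_def by (simp add: mult.assoc)
qed

end
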